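(* In the setting described in the context, fix $i$ with $0\le w_i<1$ and $j\in\{1,\ldots,p\}$. Then \[ f_i^{(-j)}(x)=a_jx(1-x)^{p-2}+b_j(1-x)^{p-1},\qquad x\in[0,1], \] for some constants $a_j\ge0$ and $b_j\ge0$. If $f(\mathbf{w})>0$, then $f_i^{(-j)}(x)>0$ for all $x\in(0,1)$, which implies $a_j+b_j>0$. If $0<w_i<1$, then $b_j=f_i^{(-j)}(0)$ and $a_j=[f_{-j}(\mathbf{w})-b_j(1-w_i)^{p-1}]/[w_i(1-w_i)^{p-2}]$; if $w_i=0$, then $b_j=f_{-j}(\mathbf{w})$ and $a_j=2^{p-1}f_i^{(-j)}(1/2)-b_j$.
   Context: Let $m>p\ge2$. Given a model matrix $\mathbf{X}\in\mathbb{R}^{m\times p}$ (rows $\mathbf{q}(\mathbf{x}_i)^T$ for distinct design points under a generalized linear model) and numbers $\nu_1,\ldots,\nu_m\ge0$ (where $\nu_i=(\partial\mu_i/\partial\eta_i)^2/\mathrm{Var}(Y_i)$), for $\mathbf{w}=(w_1,\ldots,w_m)^T$ with $w_i\ge0$, $\sum_iw_i=1$, let $\mathbf{W}=\mathrm{diag}\{w_1\nu_1,\ldots,w_m\nu_m\}$, $f(\mathbf{w})=|\mathbf{X}^T\mathbf{W}\mathbf{X}|$, and $f_{-j}(\mathbf{w})=|\mathbf{X}_{-j}^T\mathbf{W}\mathbf{X}_{-j}|$, where $\mathbf{X}_{-j}$ is $\mathbf{X}$ with its $j$th column removed. Given $\mathbf{w}$ and $i$ with $0\le w_i<1$, for $x\in[0,1]$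 let $\mathbf{w}^{(i)}(x)=\big(\tfrac{1-x}{1-w_i}w_1,\ldots,\tfrac{1-x}{1-w_i}w_{i-1},x,\tfrac{1-x}{1-w_i}w_{i+1},\ldots,\tfrac{1-x}{1-w_i}w_m\big)^T$ and $f_i^{(-j)}(x)=f_{-j}(\mathbf{w}^{(i)}(x))$. *)

theory Defs
  imports "Jordan_Normal_Form.Determinant"
begin

(* Indices are 0-based: design points r < m, columns c < p. *)

definition del_col :: "real mat \<Rightarrow> nat \<Rightarrow> real mat" where
  "del_col X j = mat (dim_row X) (dim_col X - 1)
      (\<lambda>(r, c). X $$ (r, if c < j then c else Suc c))"

definition Wmat :: "nat \<Rightarrow> (nat \<Rightarrow> real) \<Rightarrow> (nat \<Rightarrow> real) \<Rightarrow> real mat" where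
  "Wmat m nu w = mat m m (\<lambda>(r, c). if r = c then w r * nu r else 0)"

definition fdet :: "real mat \<Rightarrow> (nat \<Rightarrow> real) \<Rightarrow> (nat \<Rightarrow> real) \<Rightarrow> real" where
  "fdet X nu w = det (transpose_mat X * Wmat (dim_row X) nu w * X)"

definition fminus :: "real mat \<Rightarrow> (nat \<Rightarrow> real) \<Rightarrow> nat \<Rightarrow> (nat \<Rightarrow> real) \<Rightarrow> real" where
  "fminus X nu j w = fdet (del_col X j) nu w"

definition wpath :: "(nat \<Rightarrow> real) \<Rightarrow> nat \<Rightarrow> real \<Rightarrow> nat \<Rightarrow> real" where
  "wpath w i x = (\<lambda>k. if k = i then x else (1 - x) / (1 - w i) * w k)"

definition fij :: "real mat \<Rightarrow> (nat \<Rightarrow> real) \<Rightarrow> (nat \<Rightarrow> real) \<Rightarrow> nat \<Rightarrow> nat \<Rightarrow> real \<Rightarrow> real" where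
  "fij X nu w i j x = fminus X nu j (wpath w i x)"

end

theory Submission
  imports Defs
begin

lemma prod_entry:
  assumes Y: "Y \<in> carrier_mat m n"
  shows "transpose_mat Y * Wmat m nu w * Y =
    mat n n (\<lambda>(r,s). \<Sum>k<m. w k * nu k * Y$$(k,r) * Y$$(k,s))"
proof -
  have 1: "transpose_mat Y * Wmat m nu w = mat n m (\<lambda>(r,k). Y$$(k,r) * (w k * nu k))"
  proof (rule eq_matI)
    fix r k assume "r < dim_row (mat n m (\<lambda>(r,k). Y$$(k,r) * (w k * nu k)))"
      "k < dim_col (mat n m (\<lambda>(r,k). Y$$(k,r) * (w k * nu k)))"
    then have rk: "r < n" "k < m" by auto
    have "(transpose_mat Y * Wmat m nu w) $$ (r,k) = (\<Sum>l\<in>{0..<m}. Y$$(l,r) * (if l = k then w l * nu l else 0))"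
      using Y rk by (simp add: Wmat_def scalar_prod_def)
    also have "\<dots> = Y$$(k,r) * (w k * nu k)"
      using rk by (simp add: if_distrib[of "\<lambda>z. Y$$(_,r) * z"] sum.delta' cong: if_cong)
    finally show "(transpose_mat Y * Wmat m nu w) $$ (r,k) = mat n m (\<lambda>(r,k). Y$$(k,r) * (w k * nu k)) $$ (r,k)"
      using rk by simp
  qed (use Y in \<open>auto simp: Wmat_def\<close>)
  show ?thesis
    unfolding 1
    by (rule eq_matI) (use Y in \<open>auto simp: scalar_prod_def atLeast0LessThan intro!: sum.cong\<close>)
qed

lemma det_mat_leibniz:
  "det (mat n n F) = (\<Sum>p\<in>{p. p permutes {0..<n}}. signof p * (\<Prod>i=0..<n. F (i, p i)))"
proof -
  have "det (mat n n F) = (\<Sum>p\<in>{p. p permutes {0..<n}}. signof p * (\<Prod>i=0..<n. mat n n F $$ (i, p i)))"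
    by (rule det_def') simp
  also have "\<dots> = (\<Sum>p\<in>{p. p permutes {0..<n}}. signof p * (\<Prod>i=0..<n. F (i, p i)))"
  proof (rule sum.cong[OF refl])
    fix p assume "p \<in> {p. p permutes {0..<n}}"
    then have p: "p permutes {0..<n}" by simp
    show "signof p * (\<Prod>i=0..<n. mat n n F $$ (i, p i)) = signof p * (\<Prod>i=0..<n. F (i, p i))"
      by (rule arg_cong[where f="\<lambda>z. _ * z"], rule prod.cong[OF refl])
         (use permutes_in_image[OF p] in auto)
  qed
  finally show ?thesis .
qed

lemma det_cont:
  fixes F :: "real \<Rightarrow> nat \<Rightarrow> nat \<Rightarrow> real"
  assumes "\<And>r s. continuous_on S (\<lambda>t. F t r s)"
  shows "continuous_on S (\<lambda>t. det (mat n n (\<lambda>(r,s). F t r s)))"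
  apply (simp only: det_mat_leibniz case_prod_conv)
  by (intro continuous_on_sum continuous_on_mult continuous_on_const continuous_on_prod assms)

definition qf :: "nat \<Rightarrow> real mat \<Rightarrow> real vec \<Rightarrow> real" where
  "qf n G v = (\<Sum>r<n. \<Sum>s<n. v$r * G$$(r,s) * v$s)"

lemma qf_zero:
  assumes G: "G \<in> carrier_mat n n" and v: "v \<in> carrier_vec n" and "G *\<^sub>v v = 0\<^sub>v n"
  shows "qf n G v = 0"
proof -
  have "(\<Sum>s<n. G$$(r,s) * v$s) = 0" if r: "r < n" for r
  proof -
    have "(G *\<^sub>v v) $ r = 0" using assms r by simp
    then show ?thesis using G v r by (simp add: scalar_prod_def atLeast0LessThan)
  qed
  then have "(\<Sum>r<n. v$r * (\<Sum>s<n. G$$(r,s) * v$s)) = 0" by simp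
  then show ?thesis unfolding qf_def by (simp add: sum_distrib_left mult.assoc)
qed

lemma vec_sq_pos:
  fixes v :: "real vec"
  assumes v: "v \<in> carrier_vec n" "v \<noteq> 0\<^sub>v n"
  shows "(\<Sum>r<n. v$r * v$r) > 0"
proof -
  obtain r where r: "r < n" "v$r \<noteq> 0" using v by (metis carrier_vecD eq_vecI index_zero_vec(1,2))
  have "v$r * v$r \<le> (\<Sum>r<n. v$r * v$r)"
    by (rule member_le_sum[of r "{..<n}" "\<lambda>r. v$r * v$r"]) (use r in auto)
  moreover have "v$r * v$r > 0" using r(2) by (metis not_real_square_gt_zero)
  ultimately show ?thesis by simp
qed

lemma det_pos_aux:
  assumes G: "G \<in> carrier_mat n n"
    and nn: "\<And>v. v \<in> carrier_vec n \<Longrightarrow> qf n G v \<ge> 0"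
  shows "det G \<ge> 0" and "(\<And>v. v \<in> carrier_vec n \<Longrightarrow> v \<noteq> 0\<^sub>v n \<Longrightarrow> qf n G v > 0) \<Longrightarrow> det G > 0"
proof -
  define H where "H t = mat n n (\<lambda>(r,s). (1 - t) * (if r = s then 1 else 0) + t * G$$(r,s))" for t :: real
  have Hc: "H t \<in> carrier_mat n n" for t unfolding H_def by simp
  have qfH: "qf n (H t) v = (1 - t) * (\<Sum>r<n. v$r * v$r) + t * qf n G v" for t v
  proof -
    have "qf n (H t) v = (\<Sum>r<n. \<Sum>s<n. (if s = r then (1 - t) * (v$r * v$s) else 0) + t * (v$r * G$$(r,s) * v$s))"
      unfolding qf_def H_def by (intro sum.cong refl) (auto simp: algebra_simps)
    also have "\<dots> = (1 - t) * (\<Sum>r<n. v$r * v$r) + t * qf n G v"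
      unfolding qf_def by (simp add: sum.distrib sum_distrib_left)
    finally show ?thesis .
  qed
  have nz: "det (H t) \<noteq> 0" if t: "0 \<le> t" "t < 1" for t
  proof
    assume "det (H t) = 0"
    then obtain v where v: "v \<in> carrier_vec n" "v \<noteq> 0\<^sub>v n" "H t *\<^sub>v v = 0\<^sub>v n"
      using det_0_iff_vec_prod_zero[OF Hc] by blast
    have "qf n (H t) v = 0" using v qf_zero[OF Hc] by blast
    moreover have "(\<Sum>r<n. v$r * v$r) > 0" using vec_sq_pos v by blast
    ultimately show False using qfH[of t v] nn[OF v(1)] t
      by (smt (verit) mult_nonneg_nonneg mult_pos_pos)
  qed
  have cont: "continuous_on {0..1} (\<lambda>t. det (H t))"
    unfolding H_def by (rule det_cont) (intro continuous_intros)
  have H0: "det (H 0) = 1"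
  proof -
    have "H 0 = 1\<^sub>m n" unfolding H_def by (rule eq_matI) auto
    then show ?thesis by simp
  qed
  have H1: "H 1 = G" unfolding H_def by (rule eq_matI) (use G in auto)
  show ge: "det G \<ge> 0"
  proof (rule ccontr)
    assume "\<not> det G \<ge> 0"
    then have "det (H 1) \<le> 0" using H1 by simp
    then obtain t where t: "t \<in> {0..1}" "det (H t) = 0"
      using IVT2'[of "\<lambda>t. det (H t)" 1 0 0] cont H0 by auto
    then have "t \<noteq> 1" using H1 \<open>\<not> det G \<ge> 0\<close> by auto
    then show False using nz[of t] t by auto
  qed
  assume pd: "\<And>v. v \<in> carrier_vec n \<Longrightarrow> v \<noteq> 0\<^sub>v n \<Longrightarrow> qf n G v > 0"
  have "det G \<noteq> 0"
  proof
    assume "det G = 0"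
    then obtain v where v: "v \<in> carrier_vec n" "v \<noteq> 0\<^sub>v n" "G *\<^sub>v v = 0\<^sub>v n"
      using det_0_iff_vec_prod_zero[OF G] by blast
    then have "qf n G v = 0" using qf_zero[OF G] by blast
    then show False using pd[OF v(1,2)] by simp
  qed
  then show "det G > 0" using ge by simp
qed


lemma scale_row:
  fixes f :: "nat \<Rightarrow> real vec"
  assumes f: "\<And>i. i < n \<Longrightarrow> f i \<in> carrier_vec n" and g: "g \<in> carrier_vec n" and k: "k < n"
  shows "det (mat\<^sub>r n n (\<lambda>i. if i = k then a \<cdot>\<^sub>v g else f i)) = a * det (mat\<^sub>r n n (\<lambda>i. if i = k then g else f i))"
proof -
  have "mat\<^sub>r n n (\<lambda>i. if i = k then a \<cdot>\<^sub>v g else f i) = multrow k a (mat\<^sub>r n n (\<lambda>i. if i = k then g else f i))"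
    by (rule eq_matI) (use f g in auto)
  then show ?thesis using det_multrow[OF k, of "mat\<^sub>r n n (\<lambda>i. if i = k then g else f i)" a] by simp
qed

lemma rank1_det:
  fixes y :: "real vec" and t :: "nat \<Rightarrow> real" and \<alpha> :: real
  assumes K: "K \<subseteq> {0..<n}" and y: "y \<in> carrier_vec n"
  shows "(\<And>i. i < n \<Longrightarrow> c i \<in> carrier_vec n) \<Longrightarrow>
    det (mat\<^sub>r n n (\<lambda>i. if i \<in> K then \<alpha> \<cdot>\<^sub>v c i + t i \<cdot>\<^sub>v y else c i)) =
    \<alpha> ^ card K * det (mat\<^sub>r n n c) +
    \<alpha> ^ (card K - 1) * (\<Sum>k\<in>K. t k * det (mat\<^sub>r n n (\<lambda>i. if i = k then y else c i)))"
proof -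
  have fin: "finite K" using K finite_subset by blast
  show "(\<And>i. i < n \<Longrightarrow> c i \<in> carrier_vec n) \<Longrightarrow> ?thesis" using fin K
  proof (induction K arbitrary: c rule: finite_induct)
    case empty
    then show ?case by simp
  next
    case (insert k F c)
    have k: "k < n" and F: "F \<subseteq> {0..<n}" using insert.prems by auto
    have c: "\<And>i. i < n \<Longrightarrow> c i \<in> carrier_vec n" by fact
    define R where "R i = (if i \<in> F then \<alpha> \<cdot>\<^sub>v c i + t i \<cdot>\<^sub>v y else c i)" for i
    have R: "\<And>i. i < n \<Longrightarrow> R i \<in> carrier_vec n" unfolding R_def using c y by auto
    have "(\<lambda>i. if i \<in> insert k F then \<alpha> \<cdot>\<^sub>v c i + t i \<cdot>\<^sub>v y else c i) =
        (\<lambda>i. if i = k then (\<lambda>_. \<alpha> \<cdot>\<^sub>v c k) i + (\<lambda>_. t k \<cdot>\<^sub>v y) i else R i)"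
      unfolding R_def by auto
    then have "det (mat\<^sub>r n n (\<lambda>i. if i \<in> insert k F then \<alpha> \<cdot>\<^sub>v c i + t i \<cdot>\<^sub>v y else c i)) =
        det (mat\<^sub>r n n (\<lambda>i. if i = k then \<alpha> \<cdot>\<^sub>v c k else R i)) +
        det (mat\<^sub>r n n (\<lambda>i. if i = k then t k \<cdot>\<^sub>v y else R i))"
      using det_row_add[of "\<lambda>_. \<alpha> \<cdot>\<^sub>v c k" k n "\<lambda>_. t k \<cdot>\<^sub>v y" R] c[OF k] y R k by auto
    also have "det (mat\<^sub>r n n (\<lambda>i. if i = k then \<alpha> \<cdot>\<^sub>v c k else R i)) =
        \<alpha> * det (mat\<^sub>r n n (\<lambda>i. if i = k then c k else R i))"
      by (rule scale_row[OF R c[OF k] k])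
    also have "(\<lambda>i. if i = k then c k else R i) = (\<lambda>i. if i \<in> F then \<alpha> \<cdot>\<^sub>v c i + t i \<cdot>\<^sub>v y else c i)"
      unfolding R_def using insert.hyps by auto
    also have "det (mat\<^sub>r n n (\<lambda>i. if i = k then t k \<cdot>\<^sub>v y else R i)) =
        t k * det (mat\<^sub>r n n (\<lambda>i. if i = k then y else R i))"
      by (rule scale_row[OF R y k])
    also have "(\<lambda>i. if i = k then y else R i) = (\<lambda>i. if i \<in> F then \<alpha> \<cdot>\<^sub>v (\<lambda>i. if i = k then y else c i) i + t i \<cdot>\<^sub>v y else (\<lambda>i. if i = k then y else c i) i)"
      unfolding R_def using insert.hyps by auto
    also have "det (mat\<^sub>r n n \<dots>) = \<alpha> ^ card F * det (mat\<^sub>r n n (\<lambda>i. if i = k then y else c i)) +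
        \<alpha> ^ (card F - 1) * (\<Sum>f\<in>F. t f * det (mat\<^sub>r n n (\<lambda>i. if i = f then y else (\<lambda>i. if i = k then y else c i) i)))"
      by (rule insert.IH[OF _ F]) (use c y in auto)
    also have "(\<Sum>f\<in>F. t f * det (mat\<^sub>r n n (\<lambda>i. if i = f then y else (\<lambda>i. if i = k then y else c i) i))) = 0"
    proof (rule sum.neutral, rule ballI)
      fix f assume f: "f \<in> F"
      have fk: "f \<noteq> k" "f < n" using f insert.hyps F by auto
      have "det (mat\<^sub>r n n (\<lambda>i. if i = f then y else (\<lambda>i. if i = k then y else c i) i)) = 0"
        by (rule det_identical_rows[OF _ fk(1) fk(2) k]) (use y c fk k in auto)
      then show "t f * det (mat\<^sub>r n n (\<lambda>i. if i = f then y else (\<lambda>i. if i = k then y else c i) i)) = 0" by simp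
    qed
    also have "det (mat\<^sub>r n n (\<lambda>i. if i \<in> F then \<alpha> \<cdot>\<^sub>v c i + t i \<cdot>\<^sub>v y else c i)) =
      \<alpha> ^ card F * det (mat\<^sub>r n n c) +
      \<alpha> ^ (card F - 1) * (\<Sum>f\<in>F. t f * det (mat\<^sub>r n n (\<lambda>i. if i = f then y else c i)))"
      by (rule insert.IH[OF c F])
    finally have eq: "det (mat\<^sub>r n n (\<lambda>i. if i \<in> insert k F then \<alpha> \<cdot>\<^sub>v c i + t i \<cdot>\<^sub>v y else c i)) =
      \<alpha> * (\<alpha> ^ card F * det (mat\<^sub>r n n c) +
      \<alpha> ^ (card F - 1) * (\<Sum>f\<in>F. t f * det (mat\<^sub>r n n (\<lambda>i. if i = f then y else c i)))) +
      t k * (\<alpha> ^ card F * det (mat\<^sub>r n n (\<lambda>i. if i = k then y else c i)) + \<alpha> ^ (card F - 1) * 0)"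
      by simp
    have ck: "card (insert k F) = Suc (card F)" using insert.hyps by simp
    have sk: "(\<Sum>f\<in>insert k F. t f * det (mat\<^sub>r n n (\<lambda>i. if i = f then y else c i))) =
      t k * det (mat\<^sub>r n n (\<lambda>i. if i = k then y else c i)) + (\<Sum>f\<in>F. t f * det (mat\<^sub>r n n (\<lambda>i. if i = f then y else c i)))"
      using insert.hyps by simp
    show ?case
    proof (cases "F = {}")
      case True
      then show ?thesis unfolding eq ck sk by simp
    next
      case False
      then have "card F \<ge> 1" using insert.hyps by (simp add: Suc_leI card_gt_0_iff)
      then have "\<alpha> * \<alpha> ^ (card F - 1) = \<alpha> ^ card F"
        by (metis Suc_diff_le diff_Suc_1 power_Suc)
      then show ?thesis unfolding eq ck sk by (simp add: algebra_simps)
    qed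
  qed
qed


lemma qf_gram:
  "qf n (mat n n (\<lambda>(r,s). \<Sum>k<m. c k * Y$$(k,r) * Y$$(k,s))) v =
    (\<Sum>k<m. c k * (\<Sum>r<n. Y$$(k,r) * v$r)^2)"
proof -
  have "qf n (mat n n (\<lambda>(r,s). \<Sum>k<m. c k * Y$$(k,r) * Y$$(k,s))) v =
     (\<Sum>r<n. \<Sum>s<n. \<Sum>k<m. c k * ((Y$$(k,r) * v$r) * (Y$$(k,s) * v$s)))"
    unfolding qf_def by (intro sum.cong refl) (auto simp: sum_distrib_left sum_distrib_right algebra_simps)
  also have "\<dots> = (\<Sum>k<m. c k * ((\<Sum>r<n. Y$$(k,r) * v$r) * (\<Sum>s<n. Y$$(k,s) * v$s)))"
  proof -
    have "(\<Sum>r<n. \<Sum>s<n. \<Sum>k<m. c k * ((Y$$(k,r) * v$r) * (Y$$(k,s) * v$s))) =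
        (\<Sum>r<n. \<Sum>k<m. \<Sum>s<n. c k * ((Y$$(k,r) * v$r) * (Y$$(k,s) * v$s)))"
      by (rule sum.cong[OF refl], rule sum.swap)
    also have "\<dots> = (\<Sum>k<m. \<Sum>r<n. \<Sum>s<n. c k * ((Y$$(k,r) * v$r) * (Y$$(k,s) * v$s)))"
      by (rule sum.swap)
    also have "\<dots> = (\<Sum>k<m. c k * ((\<Sum>r<n. Y$$(k,r) * v$r) * (\<Sum>s<n. Y$$(k,s) * v$s)))"
      unfolding sum_product by (simp add: sum_distrib_left)
    finally show ?thesis .
  qed
  finally show ?thesis by (simp add: power2_eq_square)
qed

lemma sum_ins:
  fixes g :: "nat \<Rightarrow> real"
  assumes "j < p"
  shows "(\<Sum>c<p. g c) = g j + (\<Sum>r<p - 1. g (if r < j then r else Suc r))"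
proof -
  let ?ins = "\<lambda>r::nat. if r < j then r else Suc r"
  have inj: "inj_on ?ins {..<p - 1}" by (auto simp: inj_on_def split: if_splits)
  have img: "?ins ` {..<p - 1} = {..<p} - {j}"
  proof
    show "?ins ` {..<p - 1} \<subseteq> {..<p} - {j}" using assms by auto
    show "{..<p} - {j} \<subseteq> ?ins ` {..<p - 1}"
    proof
      fix c assume c: "c \<in> {..<p} - {j}"
      show "c \<in> ?ins ` {..<p - 1}"
      proof (cases "c < j")
        case True
        then show ?thesis using c assms by (intro image_eqI[of _ _ c]) auto
      next
        case False
        then show ?thesis using c assms by (intro image_eqI[of _ _ "c - 1"]) auto
      qed
    qed
  qed
  have "(\<Sum>c<p. g c) = g j + (\<Sum>c\<in>{..<p} - {j}. g c)"
    using assms by (simp add: sum.remove)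
  also have "(\<Sum>c\<in>{..<p} - {j}. g c) = (\<Sum>r<p - 1. g (?ins r))"
    unfolding img[symmetric] by (rule sum.reindex[OF inj, unfolded comp_def])
  finally show ?thesis .
qed

theorem lemma4:
  fixes X :: "real mat" and m p i j :: nat and nu w :: "nat \<Rightarrow> real"
  assumes "p \<ge> 2" and "m > p"
    and "X \<in> carrier_mat m p"
    and "\<And>r. r < m \<Longrightarrow> nu r \<ge> 0"
    and "\<And>r. r < m \<Longrightarrow> w r \<ge> 0"
    and "(\<Sum>r<m. w r) = 1"
    and "i < m" and "w i < 1"
    and "j < p"
  shows "\<exists>a b. a \<ge> 0 \<and> b \<ge> 0 \<and>
      (\<forall>x\<in>{0..1}. fij X nu w i j x = a * x * (1 - x) ^ (p - 2) + b * (1 - x) ^ (p - 1)) \<and>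
      (fdet X nu w > 0 \<longrightarrow> (\<forall>x\<in>{0<..<1}. fij X nu w i j x > 0) \<and> a + b > 0) \<and>
      (0 < w i \<longrightarrow> b = fij X nu w i j 0 \<and>
          a = (fminus X nu j w - b * (1 - w i) ^ (p - 1)) / (w i * (1 - w i) ^ (p - 2))) \<and>
      (w i = 0 \<longrightarrow> b = fminus X nu j w \<and>
          a = 2 ^ (p - 1) * fij X nu w i j (1/2) - b)"
proof -
  note p2 = assms(1) and Xc = assms(3) and nu0 = assms(4) and w0 = assms(5)
    and im = assms(7) and wi1 = assms(8) and jp = assms(9)
  define q where "q = p - 1"
  define ins where "ins r = (if r < j then r else Suc r)" for r
  define Y where "Y = del_col X j"
  have Yc: "Y \<in> carrier_mat m q" using Xc unfolding Y_def del_col_def q_def by auto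
  have Yij: "Y$$(k,r) = X$$(k, ins r)" if "k < m" "r < q" for k r
    using Xc that unfolding Y_def del_col_def q_def ins_def by auto
  define wp where "wp x = wpath w i x" for x
  define M where "M x = mat q q (\<lambda>(r,s). \<Sum>k<m. wp x k * nu k * Y$$(k,r) * Y$$(k,s))" for x
  have fijM: "fij X nu w i j x = det (M x)" for x
  proof -
    have "fij X nu w i j x = det (transpose_mat Y * Wmat m nu (wp x) * Y)"
      unfolding fij_def fminus_def fdet_def wp_def Y_def[symmetric] using Yc by simp
    also have "\<dots> = det (M x)" unfolding M_def prod_entry[OF Yc] by simp
    finally show ?thesis .
  qed
  have Mc: "M x \<in> carrier_mat q q" for x unfolding M_def by simp
  define B where "B = M 0"
  define yv where "yv = row Y i"
  have yv: "yv \<in> carrier_vec q" unfolding yv_def using Yc im by simp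
  have wpx: "wp x k = (1 - x) * wp 0 k + (if k = i then x else 0)" for x k
    unfolding wp_def wpath_def by simp
  have Mrows: "M x = mat\<^sub>r q q (\<lambda>r. if r \<in> {0..<q} then (1 - x) \<cdot>\<^sub>v row B r + (x * nu i * Y$$(i,r)) \<cdot>\<^sub>v yv else row B r)" for x
  proof (rule eq_matI)
    fix r s assume rs: "r < dim_row (mat\<^sub>r q q (\<lambda>r. if r \<in> {0..<q} then (1 - x) \<cdot>\<^sub>v row B r + (x * nu i * Y$$(i,r)) \<cdot>\<^sub>v yv else row B r))"
      "s < dim_col (mat\<^sub>r q q (\<lambda>r. if r \<in> {0..<q} then (1 - x) \<cdot>\<^sub>v row B r + (x * nu i * Y$$(i,r)) \<cdot>\<^sub>v yv else row B r))"
    then have r: "r < q" and s: "s < q" by auto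
    have "M x $$ (r,s) = (\<Sum>k<m. (1 - x) * (wp 0 k * nu k * Y$$(k,r) * Y$$(k,s)) + (if k = i then x * nu i * Y$$(i,r) * Y$$(i,s) else 0))"
      unfolding M_def using r s by (simp, intro sum.cong refl, simp add: wpx[of x] algebra_simps)
    also have "\<dots> = (1 - x) * B $$ (r,s) + x * nu i * Y$$(i,r) * Y$$(i,s)"
      unfolding B_def M_def using r s im by (simp add: sum.distrib sum_distrib_left)
    also have "\<dots> = ((1 - x) \<cdot>\<^sub>v row B r + (x * nu i * Y$$(i,r)) \<cdot>\<^sub>v yv) $ s"
    proof -
      have dB: "dim_vec (row B r) = q" "dim_vec yv = q" "dim_row B = q" "dim_col B = q" using Mc[of 0] yv unfolding B_def by auto
      show ?thesis using r s dB im Yc unfolding yv_def by (simp add: index_add_vec index_smult_vec)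
    qed
    finally show "M x $$ (r,s) = mat\<^sub>r q q (\<lambda>r. if r \<in> {0..<q} then (1 - x) \<cdot>\<^sub>v row B r + (x * nu i * Y$$(i,r)) \<cdot>\<^sub>v yv else row B r) $$ (r,s)"
      using r s yv Mc[of 0] unfolding B_def by simp
  qed (auto simp: M_def)
  have Brow: "mat\<^sub>r q q (\<lambda>r. row B r) = B"
    by (rule eq_matI) (use Mc[of 0] in \<open>auto simp: B_def\<close>)
  define D where "D k = det (mat\<^sub>r q q (\<lambda>r. if r = k then yv else row B r))" for k
  define a where "a = nu i * (\<Sum>k\<in>{0..<q}. Y$$(i,k) * D k)"
  define b where "b = det B"
  have formula: "fij X nu w i j x = a * x * (1 - x) ^ (p - 2) + b * (1 - x) ^ (p - 1)" for x
  proof -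
    have "fij X nu w i j x = (1 - x) ^ card {0..<q} * det (mat\<^sub>r q q (\<lambda>r. row B r)) +
      (1 - x) ^ (card {0..<q} - 1) * (\<Sum>k\<in>{0..<q}. (x * nu i * Y$$(i,k)) * D k)"
      unfolding fijM Mrows D_def
      by (rule rank1_det[OF _ yv]) (use Mc[of 0] in \<open>auto simp: B_def\<close>)
    also have "(\<Sum>k\<in>{0..<q}. (x * nu i * Y$$(i,k)) * D k) = x * a"
      unfolding a_def by (simp add: sum_distrib_left algebra_simps)
    moreover have cq: "card {0..<q} = p - 1" "card {0..<q} - 1 = p - 2" unfolding q_def by auto
    ultimately show ?thesis unfolding Brow b_def cq by (simp only: mult.commute mult.left_commute)
  qed
  have pw: "(1 - x) ^ (p - 1) = (1 - x) * (1 - x) ^ (p - 2)" for x :: real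
  proof -
    have "p - 1 = Suc (p - 2)" using p2 by simp
    then show ?thesis by simp
  qed
  have formula': "fij X nu w i j x = (1 - x) ^ (p - 2) * (a * x + b * (1 - x))" for x
    unfolding formula pw by (simp add: algebra_simps)
  have wp_nn: "wp x k \<ge> 0" if "0 \<le> x" "x \<le> 1" "k < m" for x k
    using that w0[of k] wi1 unfolding wp_def wpath_def by (auto intro!: mult_nonneg_nonneg divide_nonneg_nonneg)
  have qfM: "qf q (M x) v = (\<Sum>k<m. wp x k * nu k * (\<Sum>r<q. Y$$(k,r) * v$r)^2)" for x v
    unfolding M_def by (rule qf_gram)
  have fij_nn: "fij X nu w i j x \<ge> 0" if "0 \<le> x" "x \<le> 1" for x
    unfolding fijM
    by (rule det_pos_aux(1)[OF Mc], unfold qfM, rule sum_nonneg)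
       (use wp_nn[OF that] nu0 in \<open>auto intro!: mult_nonneg_nonneg\<close>)
  have b0: "b = fij X nu w i j 0" unfolding b_def B_def fijM ..
  have bnn: "b \<ge> 0" using fij_nn[of 0] b0 by simp
  have ann: "a \<ge> 0"
  proof (rule ccontr)
    assume "\<not> a \<ge> 0"
    then have an: "a < 0" by simp
    define x0 where "x0 = (2 * b - a) / (2 * (b - a))"
    have ba: "b - a > 0" using an bnn by simp
    have x0: "0 < x0" "x0 < 1" unfolding x0_def using an bnn ba by (auto simp: field_simps)
    have e: "x0 * (2 * (b - a)) = 2 * b - a" unfolding x0_def using ba by simp
    have "(a * x0 + b * (1 - x0)) * (2 * (b - a)) = a * (x0 * (2 * (b - a))) + b * (2 * (b - a)) - b * (x0 * (2 * (b - a)))"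
      by (simp add: algebra_simps)
    also have "\<dots> = (a / 2) * (2 * (b - a))" unfolding e by (simp add: algebra_simps)
    finally have lin: "a * x0 + b * (1 - x0) = a / 2" using ba by simp
    have "fij X nu w i j x0 = (1 - x0) ^ (p - 2) * (a / 2)" unfolding formula' lin ..
    moreover have "(1 - x0) ^ (p - 2) > 0" using x0 by simp
    ultimately have "fij X nu w i j x0 < 0" using an mult_pos_neg[of "(1 - x0) ^ (p - 2)" "a / 2"] by simp
    then show False using fij_nn[of x0] x0 by simp
  qed
  have part3: "fdet X nu w > 0 \<longrightarrow> (\<forall>x\<in>{0<..<1}. fij X nu w i j x > 0) \<and> a + b > 0"
  proof
    assume fpos: "fdet X nu w > 0"
    define G where "G = transpose_mat X * Wmat m nu w * X"
    have Gm: "G = mat p p (\<lambda>(r,s). \<Sum>k<m. w k * nu k * X$$(k,r) * X$$(k,s))"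
      unfolding G_def by (rule prod_entry[OF Xc])
    have Gc: "G \<in> carrier_mat p p" unfolding Gm by simp
    have detG: "det G > 0" using fpos Xc unfolding fdet_def G_def by simp
    have Xpd: "(\<Sum>k<m. w k * nu k * (\<Sum>c<p. X$$(k,c) * u$c)^2) > 0"
      if u: "u \<in> carrier_vec p" "u \<noteq> 0\<^sub>v p" for u
    proof (rule ccontr)
      define S where "S k = (\<Sum>c<p. X$$(k,c) * u$c)" for k
      assume "\<not> ?thesis"
      moreover have nn: "\<forall>k\<in>{..<m}. w k * nu k * (S k)^2 \<ge> 0"
        using w0 nu0 by (auto intro!: mult_nonneg_nonneg)
      ultimately have "(\<Sum>k<m. w k * nu k * (S k)^2) = 0"
        unfolding S_def by (smt (verit) sum_nonneg)
      then have z: "\<forall>k\<in>{..<m}. w k * nu k * (S k)^2 = 0"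
        using sum_nonneg_eq_0_iff[of "{..<m}" "\<lambda>k. w k * nu k * (S k)^2"] nn by simp
      have z2: "w k * nu k * S k = 0" if "k < m" for k
        using z that by (auto simp: power2_eq_square)
      have "G *\<^sub>v u = 0\<^sub>v p"
      proof (rule eq_vecI)
        fix r assume "r < dim_vec (0\<^sub>v p :: real vec)"
        then have r: "r < p" by simp
        have "(G *\<^sub>v u) $ r = (\<Sum>s<p. (\<Sum>k<m. w k * nu k * X$$(k,r) * X$$(k,s)) * u$s)"
          using r u Gc unfolding Gm by (simp add: scalar_prod_def atLeast0LessThan)
        also have "\<dots> = (\<Sum>k<m. \<Sum>s<p. X$$(k,r) * (w k * nu k * (X$$(k,s) * u$s)))"
        proof -
          have "(\<Sum>s<p. (\<Sum>k<m. w k * nu k * X$$(k,r) * X$$(k,s)) * u$s) = (\<Sum>s<p. \<Sum>k<m. X$$(k,r) * (w k * nu k * (X$$(k,s) * u$s)))"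
            by (intro sum.cong refl) (simp add: sum_distrib_right sum_distrib_left algebra_simps)
          then show ?thesis by (simp add: sum.swap[of _ "{..<p}"])
        qed
        also have "\<dots> = (\<Sum>k<m. X$$(k,r) * (w k * nu k * S k))"
          unfolding S_def by (simp add: sum_distrib_left)
        also have "\<dots> = 0" by (rule sum.neutral) (use z2 in auto)
        finally show "(G *\<^sub>v u) $ r = (0\<^sub>v p :: real vec) $ r" using r by simp
      qed (use Gc in simp)
      then have "det G = 0" using det_0_iff_vec_prod_zero[OF Gc] u by blast
      then show False using detG by simp
    qed
    have pos: "fij X nu w i j x > 0" if x: "0 < x" "x < 1" for x
      unfolding fijM
    proof (rule det_pos_aux(2)[OF Mc])
      fix v :: "real vec" assume "v \<in> carrier_vec q"
      then show "qf q (M x) v \<ge> 0" unfolding qfM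
        using wp_nn[of x] x nu0 by (auto intro!: sum_nonneg mult_nonneg_nonneg)
    next
      fix v :: "real vec" assume v: "v \<in> carrier_vec q" "v \<noteq> 0\<^sub>v q"
      define u where "u = vec p (\<lambda>c. if c = j then 0 else v $ (if c < j then c else c - 1))"
      have uc: "u \<in> carrier_vec p" unfolding u_def by simp
      have uins: "u $ (ins r) = v $ r" if "r < q" for r
        using that jp unfolding u_def ins_def q_def by auto
      have uj: "u $ j = 0" using jp unfolding u_def by simp
      have un: "u \<noteq> 0\<^sub>v p"
      proof
        assume "u = 0\<^sub>v p"
        obtain r where r: "r < q" "v$r \<noteq> 0" using v by (metis carrier_vecD eq_vecI index_zero_vec(1,2))
        have "ins r < p" using r jp unfolding ins_def q_def by auto
        then have "u $ (ins r) = 0" using \<open>u = 0\<^sub>v p\<close> by simp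
        then show False using uins[OF r(1)] r(2) by simp
      qed
      have Seq: "(\<Sum>r<q. Y$$(k,r) * v$r) = (\<Sum>c<p. X$$(k,c) * u$c)" if k: "k < m" for k
      proof -
        have "(\<Sum>c<p. X$$(k,c) * u$c) = X$$(k,j) * u$j + (\<Sum>r<p - 1. X$$(k, ins r) * u$(ins r))"
          using sum_ins[OF jp, of "\<lambda>c. X$$(k,c) * u$c"] unfolding ins_def by simp
        also have "\<dots> = (\<Sum>r<q. Y$$(k,r) * v$r)"
          using uj uins Yij[OF k] unfolding q_def by simp
        finally show ?thesis by simp
      qed
      define c0 where "c0 = min x (1 - x)"
      have c0: "c0 > 0" using x unfolding c0_def by simp
      have wpc: "wp x k \<ge> c0 * w k" if k: "k < m" for k
      proof (cases "k = i")
        case True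
        have "c0 * w k \<le> x * 1" using w0[OF k] wi1 True c0 unfolding c0_def
          by (intro mult_mono) auto
        then show ?thesis using True unfolding wp_def wpath_def by simp
      next
        case False
        have "c0 * w k \<le> (1 - x) * w k" using w0[OF k] unfolding c0_def by (intro mult_right_mono) auto
        also have "\<dots> \<le> (1 - x) / (1 - w i) * w k"
        proof (intro mult_right_mono)
          show "1 - x \<le> (1 - x) / (1 - w i)" using x wi1 w0[OF im] mult_left_le_one_le[of "w i" x] by (simp add: field_simps)
        qed (use w0[OF k] in auto)
        finally show ?thesis using False unfolding wp_def wpath_def by simp
      qed
      have "c0 * (\<Sum>k<m. w k * nu k * (\<Sum>c<p. X$$(k,c) * u$c)^2) = (\<Sum>k<m. (c0 * w k) * (nu k * (\<Sum>r<q. Y$$(k,r) * v$r)^2))"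
        unfolding sum_distrib_left by (intro sum.cong refl) (simp add: Seq)
      also have "\<dots> \<le> (\<Sum>k<m. wp x k * (nu k * (\<Sum>r<q. Y$$(k,r) * v$r)^2))"
        by (rule sum_mono, rule mult_right_mono) (use wpc nu0 in auto)
      also have "\<dots> = qf q (M x) v" unfolding qfM by (simp add: algebra_simps)
      finally show "qf q (M x) v > 0"
        using Xpd[OF uc un] c0 by (smt (verit) mult_pos_pos)
    qed
    have "fij X nu w i j (1/2) > 0" using pos by simp
    then have "(1 / 2) ^ (p - 2) * (a * (1/2) + b * (1 - 1/2)) > 0" unfolding formula' by simp
    then have "a * (1/2) + b * (1 - 1/2) > 0" by (simp add: zero_less_mult_iff)
    then have "a + b > 0" by simp
    then show "(\<forall>x\<in>{0<..<1}. fij X nu w i j x > 0) \<and> a + b > 0" using pos by auto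
  qed
  have part4: "0 < w i \<longrightarrow> b = fij X nu w i j 0 \<and>
          a = (fminus X nu j w - b * (1 - w i) ^ (p - 1)) / (w i * (1 - w i) ^ (p - 2))"
  proof
    assume wpos: "0 < w i"
    have "wpath w i (w i) = w" unfolding wpath_def using wi1 by (auto simp: fun_eq_iff)
    then have F: "fminus X nu j w = fij X nu w i j (w i)" unfolding fij_def by simp
    have "w i * (1 - w i) ^ (p - 2) \<noteq> 0" using wpos wi1 by simp
    then show "b = fij X nu w i j 0 \<and>
          a = (fminus X nu j w - b * (1 - w i) ^ (p - 1)) / (w i * (1 - w i) ^ (p - 2))"
      using b0 unfolding F formula by (simp add: field_simps)
  qed
  have part5: "w i = 0 \<longrightarrow> b = fminus X nu j w \<and> a = 2 ^ (p - 1) * fij X nu w i j (1/2) - b"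
  proof
    assume wz: "w i = 0"
    have "wpath w i 0 = w" unfolding wpath_def using wz by (auto simp: fun_eq_iff)
    then have F: "fminus X nu j w = fij X nu w i j 0" unfolding fij_def by simp
    have hh: "(1 - 1/2 :: real) = 1/2" by simp
    have e: "fij X nu w i j (1/2) = (1/2) ^ (p - 2) * (a * (1/2) + b * (1/2))"
      using formula'[of "1/2"] unfolding hh .
    have h: "(2::real) ^ (p - 1) = 2 * 2 ^ (p - 2)"
    proof -
      have "p - 1 = Suc (p - 2)" using p2 by simp
      then show ?thesis by simp
    qed
    have h3: "(2::real) ^ (p - 2) * (1/2) ^ (p - 2) = 1"
      by (simp add: power_mult_distrib[symmetric])
    have "2 ^ (p - 1) * fij X nu w i j (1/2) = ((2::real) ^ (p - 2) * (1/2) ^ (p - 2)) * (2 * (a * (1/2) + b * (1/2)))"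
      unfolding e h by (simp only: mult_ac)
    then have "2 ^ (p - 1) * fij X nu w i j (1/2) = a + b"
      unfolding h3 by simp
    then show "b = fminus X nu j w \<and> a = 2 ^ (p - 1) * fij X nu w i j (1/2) - b"
      using b0 F by simp
  qed
  show ?thesis
    by (rule exI[of _ a], rule exI[of _ b]) (use ann bnn formula part3 part4 part5 in blast)
qed

end
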